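(* Fix $\kappa>0$ and $x_0\in\mathbb R^2$. Let $m\in\mathbb Z\setminus\{0\}$, $\Phi(\alpha):=-m\,\vec\alpha\cdot x_0$, $I=[a,b]\subset[-\pi,\pi]$, $l\in\mathbb Z$, and $g\in C^1(I)$. Suppose (1) $\Phi''(\alpha)\ne0$ for $\alpha\in(a,b)$; (2) there is $\alpha_0\in I$ with $\kappa\Phi'(\alpha_0)=l$ and $\Phi''(\alpha_0)\neq0$; (3) $|\kappa\Phi'(\alpha)-l|\le1/2$ for all $\alpha\in I$. Then for every $\epsilon>0$, $$\Bigl|\int_I g(\alpha)h_l(\alpha)\,e\Bigl(\frac{\Phi_l(\alpha)}{\epsilon}\Bigr)d\alpha\Bigr|\le c\,\epsilon^{1/2}\Bigl[\max_{I}|g|+\int_I|g'(\alpha)|\,d\alpha\Bigr]\,|\Phi''(\alpha_0)|^{-1/2},$$ where $c$ depends only on $\kappa$ and $x_0$ (it is independent of $g$, $m$, $\epsilon$, $l$ and $I$).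
   Context: $\vec\alpha=(\cos\alpha,\sin\alpha)$, $e(r):=\exp(2\pi ir)$. For the given $\Phi$ and $l$: $\Phi_l(\alpha):=\Phi(\alpha)-(l/\kappa)\alpha$, and $h_l(\alpha):=\dfrac{\pi\kappa\Phi_l'(\alpha)}{\sin(\pi\kappa\Phi_l'(\alpha))}$ if $\Phi_l'(\alpha)\neq0$, $h_l(\alpha):=1$ if $\Phi_l'(\alpha)=0$ (note $\kappa\Phi_l'=\kappa\Phi'-l\in[-1/2,1/2]$ on $I$). *)

theory Defs
  imports "HOL-Analysis.Analysis"
begin

definition dirvec :: "real \<Rightarrow> real^2" where
  "dirvec \<alpha> = vector [cos \<alpha>, sin \<alpha>]"

definition e :: "real \<Rightarrow> complex" where
  "e r = exp (2 * of_real pi * \<i> * of_real r)"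

definition Phi :: "int \<Rightarrow> real^2 \<Rightarrow> real \<Rightarrow> real" where
  "Phi m x0 \<alpha> = - real_of_int m * (dirvec \<alpha> \<bullet> x0)"

definition Phi_l :: "real \<Rightarrow> int \<Rightarrow> real^2 \<Rightarrow> int \<Rightarrow> real \<Rightarrow> real" where
  "Phi_l \<kappa> m x0 l \<alpha> = Phi m x0 \<alpha> - (real_of_int l / \<kappa>) * \<alpha>"

definition h_l :: "real \<Rightarrow> int \<Rightarrow> real^2 \<Rightarrow> int \<Rightarrow> real \<Rightarrow> real" where
  "h_l \<kappa> m x0 l \<alpha> =
     (let d = deriv (Phi_l \<kappa> m x0 l) \<alpha> in
      if d \<noteq> 0 then (pi * \<kappa> * d) / sin (pi * \<kappa> * d) else 1)"

end

theory Submission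
  imports Defs
begin


definition D1 :: "int \<Rightarrow> real^2 \<Rightarrow> real \<Rightarrow> real" where
  "D1 m x0 t = real_of_int m * (sin t * x0$1 - cos t * x0$2)"
definition D2 :: "int \<Rightarrow> real^2 \<Rightarrow> real \<Rightarrow> real" where
  "D2 m x0 t = real_of_int m * (cos t * x0$1 + sin t * x0$2)"

lemma Phi_eq: "Phi m x0 t = - real_of_int m * (cos t * x0$1 + sin t * x0$2)"
  by (simp add: Phi_def dirvec_def inner_vec_def sum_2)

lemma Phi_deriv: "(Phi m x0 has_real_derivative D1 m x0 t) (at t)"
  unfolding Phi_eq[abs_def] D1_def
  by (auto intro!: derivative_eq_intros simp: algebra_simps)

lemma D1_deriv: "(D1 m x0 has_real_derivative D2 m x0 t) (at t)"
  unfolding D1_def[abs_def] D2_def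
  by (auto intro!: derivative_eq_intros simp: algebra_simps)

lemma deriv_Phi: "deriv (Phi m x0) = D1 m x0"
  using Phi_deriv DERIV_imp_deriv by blast

lemma deriv2_Phi: "deriv (deriv (Phi m x0)) = D2 m x0"
  unfolding deriv_Phi using D1_deriv DERIV_imp_deriv by blast

lemma Phil_deriv: "(Phi_l \<kappa> m x0 l has_real_derivative (D1 m x0 t - real_of_int l / \<kappa>)) (at t)"
proof -
  have "((\<lambda>t. Phi m x0 t - real_of_int l / \<kappa> * t) has_real_derivative (D1 m x0 t - real_of_int l / \<kappa>)) (at t)"
    using DERIV_diff[OF Phi_deriv[of m x0 t] DERIV_cmult_Id[of "real_of_int l / \<kappa>"]] by simp
  then show ?thesis unfolding Phi_l_def[abs_def] .
qed

lemma deriv_Phil: "deriv (Phi_l \<kappa> m x0 l) t = D1 m x0 t - real_of_int l / \<kappa>"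
  using Phil_deriv DERIV_imp_deriv by blast

lemma D1_cont: "continuous_on S (D2 m x0)"
  unfolding D2_def[abs_def] by (intro continuous_intros)

lemma trig1: "D1 m x0 (s + d) - D1 m x0 (s - d) = 2 * sin d * D2 m x0 s"
  by (simp add: D1_def D2_def sin_add sin_diff cos_add cos_diff algebra_simps)
lemma trig2: "D2 m x0 (s + d) + D2 m x0 (s - d) = 2 * cos d * D2 m x0 s"
  by (simp add: D1_def D2_def sin_add sin_diff cos_add cos_diff algebra_simps)

lemma jordan0: assumes "0 \<le> x" "x \<le> pi/2" shows "2 * x / pi \<le> sin x"
proof -
  have conc: "concave_on {0..pi/2} sin"
    by (rule f''_le0_imp_concave[where f'=cos and f''="\<lambda>x. - sin x"])
       (auto intro!: derivative_eq_intros sin_ge_zero)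
  have "(1 - 2*x/pi) * sin 0 + (2*x/pi) * sin (pi/2) \<le> sin ((1 - 2*x/pi) * 0 + (2*x/pi) * (pi/2))"
    using concave_onD[OF conc, of "2*x/pi" 0 "pi/2"] assms by (auto simp: field_simps)
  then show ?thesis by simp
qed

lemma jordan: assumes "\<bar>x\<bar> \<le> pi/2" shows "2 * \<bar>x\<bar> / pi \<le> \<bar>sin x\<bar>"
proof (cases "x \<ge> 0")
  case True then show ?thesis using jordan0[of x] assms by auto
next
  case False then show ?thesis using jordan0[of "-x"] assms by auto
qed



lemma norm_e: "norm (e r) = 1"
  by (simp add: e_def norm_exp_eq_Re)

lemma piece:
  fixes g g' :: "real \<Rightarrow> complex" and P P' F :: "real \<Rightarrow> real"
  assumes cd: "c \<le> d" and kp: "\<kappa> > 0" and ep: "\<epsilon> > 0" and Lp: "L > 0"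
  and Pd: "\<And>t. (P has_real_derivative P' t) (at t)"
  and P'c: "continuous_on {c..d} P'"
  and sg: "\<sigma> = 1 \<or> \<sigma> = -1" "\<And>t. t \<in> {c..d} \<Longrightarrow> 0 \<le> \<sigma> * P' t"
  and Fd: "\<And>t. (F has_real_derivative P t / \<kappa>) (at t)"
  and Pb: "\<And>t. t \<in> {c..d} \<Longrightarrow> L \<le> \<bar>P t\<bar> \<and> \<bar>P t\<bar> \<le> 1/2"
  and gd: "\<And>t. t \<in> {c..d} \<Longrightarrow> (g has_vector_derivative g' t) (at t within {c..d})"
  and g'c: "continuous_on {c..d} g'"
  and gM: "\<And>t. t \<in> {c..d} \<Longrightarrow> norm (g t) \<le> M"
  shows "\<exists>I. ((\<lambda>t. g t * complex_of_real (pi * P t / sin (pi * P t)) * e (F t / \<epsilon>)) has_integral I) {c..d}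
            \<and> norm I \<le> \<kappa> * \<epsilon> * (M + integral {c..d} (\<lambda>t. norm (g' t))) / L"
proof -
  define S where "S t = sin (pi * P t)" for t
  have Sd: "(S has_real_derivative cos (pi * P t) * (pi * P' t)) (at t)" for t
    unfolding S_def[abs_def] by (auto intro!: derivative_eq_intros Pd)
  have Sb: "2 * L \<le> \<bar>S t\<bar>" if "t \<in> {c..d}" for t
  proof -
    have "\<bar>pi * P t\<bar> \<le> pi / 2" using Pb[OF that] by (simp add: abs_mult)
    from jordan[OF this] have "2 * \<bar>P t\<bar> \<le> \<bar>S t\<bar>" by (simp add: S_def abs_mult)
    then show ?thesis using Pb[OF that] by linarith
  qed
  have Sn: "S t \<noteq> 0" if "t \<in> {c..d}" for t using Sb[OF that] Lp by auto
  have cosnn: "0 \<le> cos (pi * P t)" if "t \<in> {c..d}" for t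
  proof -
    have h: "-1/2 \<le> P t" "P t \<le> 1/2" using Pb[OF that] by auto
    have "pi * P t \<le> pi * (1/2)" using h(2) by (intro mult_left_mono) auto
    moreover have "pi * (-1/2) \<le> pi * P t" using h(1) by (intro mult_left_mono) auto
    ultimately show ?thesis by (intro cos_ge_zero) auto
  qed
  define R where "R t = - (cos (pi * P t) * (pi * P' t)) / (S t)^2" for t
  have invSd: "((\<lambda>t. inverse (S t)) has_real_derivative R t) (at t)" if "t \<in> {c..d}" for t
    using DERIV_inverse_fun[OF Sd Sn[OF that]] by (simp add: R_def power2_eq_square divide_inverse)
  have Rsg: "\<bar>R t\<bar> = - \<sigma> * R t" if "t \<in> {c..d}" for t
  proof -
    have "0 \<le> cos (pi * P t) * (pi * (\<sigma> * P' t)) / (S t)^2"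
      by (rule divide_nonneg_nonneg[OF mult_nonneg_nonneg[OF cosnn[OF that] mult_nonneg_nonneg[OF pi_ge_zero sg(2)[OF that]]] zero_le_power2])
    then have "0 \<le> - \<sigma> * R t" by (simp add: R_def algebra_simps)
    then show ?thesis using sg(1) by auto
  qed
  have Scont: "continuous_on {c..d} S"
    using Sd by (meson DERIV_continuous continuous_at_imp_continuous_on)
  have invScont: "continuous_on {c..d} (\<lambda>t. inverse (S t))"
    using Scont Sn by (intro continuous_intros) auto
  have Pcont: "continuous_on {c..d} P"
    using Pd by (meson DERIV_continuous continuous_at_imp_continuous_on)
  have Rcont: "continuous_on {c..d} R"
    unfolding R_def[abs_def] using Scont Pcont P'c Sn by (intro continuous_intros) auto
  have gcont: "continuous_on {c..d} g" using gd by (rule continuous_on_vector_derivative)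
  define u where "u t = complex_of_real (inverse (S t)) * g t" for t
  define u' where "u' t = complex_of_real (inverse (S t)) * g' t + complex_of_real (R t) * g t" for t
  have ud: "(u has_vector_derivative u' t) (at t within {c..d})" if "t \<in> {c..d}" for t
  proof -
    have "((\<lambda>t. complex_of_real (inverse (S t))) has_vector_derivative complex_of_real (R t)) (at t within {c..d})"
      by (rule has_vector_derivative_of_real) (rule has_field_derivative_at_within[OF invSd[OF that]])
    from has_vector_derivative_mult[OF this gd[OF that]] show ?thesis
      unfolding u_def[abs_def] u'_def by simp
  qed
  have ucont: "continuous_on {c..d} u" using ud by (rule continuous_on_vector_derivative)
  have u'cont: "continuous_on {c..d} u'"
    unfolding u'_def[abs_def] using invScont Rcont g'c gcont Scont Sn by (intro continuous_intros) auto
  define E where "E t = e (F t / \<epsilon>)" for t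
  define E' where "E' t = E t * (\<i> * complex_of_real (2 * pi * P t / (\<kappa> * \<epsilon>)))" for t
  have Ed: "(E has_vector_derivative E' t) (at t)" for t
  proof -
    have "((\<lambda>t. complex_of_real (F t / \<epsilon>)) has_vector_derivative complex_of_real (P t / \<kappa> / \<epsilon>)) (at t)"
      by (rule has_vector_derivative_of_real) (use ep in \<open>auto intro!: derivative_eq_intros Fd\<close>)
    then have "((\<lambda>t. (2 * complex_of_real pi * \<i>) * complex_of_real (F t / \<epsilon>)) has_vector_derivative
                  (2 * complex_of_real pi * \<i>) * complex_of_real (P t / \<kappa> / \<epsilon>)) (at t)"
      by (rule has_vector_derivative_mult_right)
    from field_vector_diff_chain_at[OF this DERIV_exp] show ?thesis
      unfolding E_def[abs_def] E'_def e_def o_def by (simp add: field_simps)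
  qed
  have Econt: "continuous_on {c..d} E"
    using Ed by (meson has_vector_derivative_continuous continuous_at_imp_continuous_on)
  have Eu'int: "(\<lambda>t. E t * u' t) integrable_on {c..d}"
    using Econt u'cont by (intro integrable_continuous_real continuous_intros)
  define J where "J = integral {c..d} (\<lambda>t. E t * u' t)"
  have int1: "((\<lambda>t. E t * u' t) has_integral J) {c..d}" using Eu'int J_def by auto
  define y where "y = E d * u d - E c * u c - J"
  have ibp: "((\<lambda>t. E' t * u t) has_integral y) {c..d}"
  proof (rule integration_by_parts_interior[OF bounded_bilinear_mult cd Econt ucont])
    show "(E has_vector_derivative E' x) (at x)" for x by (rule Ed)
    fix x assume x: "x \<in> {c<..<d}"
    then have "at x within {c..d} = at x" by (intro at_within_interior) auto
    with ud[of x] x show "(u has_vector_derivative u' x) (at x)" by auto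
  next
    show "((\<lambda>t. E t * u' t) has_integral E d * u d - E c * u c - y) {c..d}"
      using int1 by (simp add: y_def)
  qed
  define w where "w = complex_of_real (\<kappa> * \<epsilon>) / (2 * \<i>)"
  have eqf: "g t * complex_of_real (pi * P t / sin (pi * P t)) * e (F t / \<epsilon>) = w * (E' t * u t)" for t
    using kp ep by (simp add: w_def E'_def u_def E_def S_def field_simps)
  have I: "((\<lambda>t. g t * complex_of_real (pi * P t / sin (pi * P t)) * e (F t / \<epsilon>)) has_integral w * y) {c..d}"
    unfolding eqf by (rule has_integral_mult_right[OF ibp])
  have M0: "0 \<le> M" using gM[of c] cd by (meson atLeastAtMost_iff norm_ge_zero order.trans order_refl)
  have unorm: "norm (u t) \<le> M / (2 * L)" if "t \<in> {c..d}" for t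
  proof -
    have "norm (u t) = norm (g t) / \<bar>S t\<bar>" by (simp add: u_def norm_mult divide_inverse mult.commute norm_inverse)
    also have "\<dots> \<le> M / (2 * L)"
      using gM[OF that] Sb[OF that] Lp M0 by (intro frac_le) auto
    finally show ?thesis .
  qed
  have invSb: "\<bar>inverse (S t)\<bar> \<le> 1 / (2 * L)" if "t \<in> {c..d}" for t
    using Sb[OF that] Lp by (simp add: abs_inverse) (metis inverse_eq_divide le_imp_inverse_le mult_pos_pos zero_less_numeral)
  define V where "V = integral {c..d} (\<lambda>t. norm (g' t))"
  have V: "((\<lambda>t. norm (g' t)) has_integral V) {c..d}"
    unfolding V_def using g'c by (intro integrable_integral integrable_continuous_real continuous_intros)
  have V0: "0 \<le> V" unfolding V_def by (intro integral_nonneg) (auto intro: integrable_continuous_real continuous_intros g'c)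
  have Rint: "(R has_integral inverse (S d) - inverse (S c)) {c..d}"
    using cd invSd by (intro fundamental_theorem_of_calculus)
      (auto simp: has_real_derivative_iff_has_vector_derivative[symmetric] intro: has_field_derivative_at_within)
  define G where "G t = norm (g' t) * (1 / (2 * L)) + R t * (- \<sigma> * M)" for t
  have Gint: "(G has_integral V * (1 / (2 * L)) + (inverse (S d) - inverse (S c)) * (- \<sigma> * M)) {c..d}"
    unfolding G_def[abs_def] by (intro has_integral_add has_integral_mult_left V Rint)
  have normJ: "norm J \<le> V * (1 / (2 * L)) + (inverse (S d) - inverse (S c)) * (- \<sigma> * M)"
  proof -
    have "norm J \<le> integral {c..d} G"
      unfolding J_def
    proof (rule integral_norm_bound_integral[OF Eu'int])
      show "G integrable_on {c..d}" using Gint by blast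
      fix t assume t: "t \<in> {c..d}"
      have "norm (E t * u' t) = norm (u' t)" by (simp add: norm_mult E_def norm_e)
      also have "\<dots> \<le> \<bar>inverse (S t)\<bar> * norm (g' t) + \<bar>R t\<bar> * norm (g t)"
        unfolding u'_def by (rule order.trans[OF norm_triangle_ineq]) (simp add: norm_mult norm_inverse)
      also have "\<dots> \<le> (1 / (2 * L)) * norm (g' t) + \<bar>R t\<bar> * M"
        using invSb[OF t] gM[OF t] Lp by (intro add_mono mult_mono) auto
      also have "\<dots> = G t" using Rsg[OF t] by (simp add: G_def algebra_simps)
      finally show "norm (E t * u' t) \<le> G t" .
    qed
    then show ?thesis using integral_unique[OF Gint] by simp
  qed
  have bdry: "(inverse (S d) - inverse (S c)) * (- \<sigma>) \<le> 1 / L"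
  proof -
    have "(inverse (S d) - inverse (S c)) * (- \<sigma>) \<le> \<bar>inverse (S d)\<bar> + \<bar>inverse (S c)\<bar>"
    proof -
      have "\<And>x y::real. (x - y) * (- \<sigma>) \<le> \<bar>x\<bar> + \<bar>y\<bar>" using sg(1) by auto
      then show ?thesis .
    qed
    also have "\<dots> \<le> 1 / (2 * L) + 1 / (2 * L)" using invSb cd by (intro add_mono) auto
    finally show ?thesis by simp
  qed
  have normy: "norm y \<le> M / L + V / (2 * L) + M / L"
  proof -
    have "norm y \<le> norm (E d * u d) + norm (E c * u c) + norm J"
      unfolding y_def using norm_triangle_ineq4[of "E d * u d - E c * u c" J]
        norm_triangle_ineq4[of "E d * u d" "E c * u c"] by linarith
    also have "norm (E d * u d) \<le> M / (2 * L)" using unorm[of d] cd by (simp add: norm_mult E_def norm_e)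
    also have "norm (E c * u c) \<le> M / (2 * L)" using unorm[of c] cd by (simp add: norm_mult E_def norm_e)
    also have "norm J \<le> V / (2 * L) + M / L"
    proof -
      have "(inverse (S d) - inverse (S c)) * (- \<sigma> * M) \<le> (1 / L) * M"
        using mult_right_mono[OF bdry M0] by (simp add: algebra_simps)
      then show ?thesis using normJ by simp
    qed
    finally show ?thesis by (simp add: field_simps)
  qed
  have nw: "norm w = \<kappa> * \<epsilon> / 2" using kp ep by (simp add: w_def norm_divide norm_mult)
  have "norm (w * y) \<le> \<kappa> * \<epsilon> / 2 * (M / L + V / (2 * L) + M / L)"
    unfolding norm_mult nw using kp ep normy by (intro mult_left_mono) auto
  also have "\<dots> \<le> \<kappa> * \<epsilon> * (M + V) / L"
    using kp ep Lp V0 M0 by (simp add: field_simps)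
  finally show ?thesis using I V_def by blast
qed



lemma D2_cont: "continuous_on S (\<lambda>t. s * D2 m x0 t)"
  unfolding D2_def by (intro continuous_intros)

lemma sign_lemma:
  assumes ab: "\<forall>\<alpha>\<in>{a<..<b}. D2 m x0 \<alpha> \<noteq> 0" and a0: "\<alpha>0 \<in> {a..b}"
    and sp: "0 < \<sigma> * D2 m x0 \<alpha>0" and t: "t \<in> {a..b}"
  shows "0 \<le> \<sigma> * D2 m x0 t"
proof (rule ccontr)
  assume neg: "\<not> 0 \<le> \<sigma> * D2 m x0 t"
  have "\<exists>z. z \<in> {a<..<b} \<and> \<sigma> * D2 m x0 z = 0"
  proof (cases "t \<le> \<alpha>0")
    case True
    obtain z where z: "t \<le> z" "z \<le> \<alpha>0" "\<sigma> * D2 m x0 z = 0"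
      using IVT'[of "\<lambda>t. \<sigma> * D2 m x0 t" t 0 \<alpha>0, OF _ _ True D2_cont] neg sp by auto
    have "z \<noteq> t" "z \<noteq> \<alpha>0" using z neg sp by auto
    then show ?thesis using z t a0 by (intro exI[of _ z]) auto
  next
    case False
    obtain z where z: "\<alpha>0 \<le> z" "z \<le> t" "\<sigma> * D2 m x0 z = 0"
      using IVT2'[of "\<lambda>t. \<sigma> * D2 m x0 t" t 0 \<alpha>0, OF _ _ _ D2_cont] neg sp False by auto
    have "z \<noteq> t" "z \<noteq> \<alpha>0" using z neg sp by auto
    then show ?thesis using z t a0 by (intro exI[of _ z]) auto
  qed
  then show False using ab sp by auto
qed

lemma cos_pos_small: assumes "0 < cos x" "\<bar>x\<bar> \<le> pi" shows "\<bar>x\<bar> \<le> pi / 2"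
proof (rule ccontr)
  assume "\<not> \<bar>x\<bar> \<le> pi / 2"
  then have "0 \<le> \<bar>x\<bar> - pi/2" "\<bar>x\<bar> - pi/2 \<le> pi" using assms by auto
  then have "0 \<le> sin (\<bar>x\<bar> - pi/2)" by (rule sin_ge_zero)
  moreover have "cos \<bar>x\<bar> = - sin (\<bar>x\<bar> - pi/2)" by (simp add: sin_diff)
  moreover have "cos \<bar>x\<bar> = cos x" by simp
  ultimately show False using assms by linarith
qed

lemma lower_lemma:
  assumes ab: "\<forall>\<alpha>\<in>{a<..<b}. D2 m x0 \<alpha> \<noteq> 0" and a0: "\<alpha>0 \<in> {a..b}"
    and sp: "0 < \<sigma> * D2 m x0 \<alpha>0" and s1: "\<sigma> = 1 \<or> \<sigma> = -1"
    and t: "t \<in> {a..b}" and pa: "-pi \<le> a" "b \<le> pi"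
  shows "\<bar>D2 m x0 \<alpha>0\<bar> * \<bar>t - \<alpha>0\<bar> / pi \<le> \<bar>D1 m x0 t - D1 m x0 \<alpha>0\<bar>"
proof -
  define s where "s = (t + \<alpha>0) / 2"
  define dd where "dd = (t - \<alpha>0) / 2"
  have ts: "t = s + dd" "\<alpha>0 = s - dd" by (simp_all add: s_def dd_def field_simps)
  have sab: "s \<in> {a..b}" using t a0 by (auto simp: s_def)
  have Q: "\<sigma> * D2 m x0 \<alpha>0 = \<bar>D2 m x0 \<alpha>0\<bar>" using s1 sp by auto
  have nt: "0 \<le> \<sigma> * D2 m x0 t" by (rule sign_lemma[OF ab a0 sp t])
  have ns: "0 \<le> \<sigma> * D2 m x0 s" by (rule sign_lemma[OF ab a0 sp sab])
  have e2: "\<sigma> * D2 m x0 t + \<sigma> * D2 m x0 \<alpha>0 = 2 * cos dd * (\<sigma> * D2 m x0 s)"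
  proof -
    have "\<sigma> * (D2 m x0 t + D2 m x0 \<alpha>0) = \<sigma> * (2 * cos dd * D2 m x0 s)"
      using trig2[of m x0 s dd] unfolding ts[symmetric] by simp
    then show ?thesis by (simp add: algebra_simps)
  qed
  have pos: "0 < cos dd * (\<sigma> * D2 m x0 s)" using e2 nt sp by linarith
  have cpos: "0 < cos dd" using pos ns by (metis mult_nonpos_nonneg not_less zero_less_mult_iff)
  have "cos dd * (\<sigma> * D2 m x0 s) \<le> \<sigma> * D2 m x0 s"
    using mult_right_mono[OF cos_le_one[of dd] ns] by simp
  then have sQ: "\<bar>D2 m x0 \<alpha>0\<bar> \<le> 2 * (\<sigma> * D2 m x0 s)" using e2 nt Q by linarith
  have "\<bar>dd\<bar> \<le> pi" using t a0 pa by (auto simp: dd_def)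
  then have ddb: "\<bar>dd\<bar> \<le> pi / 2" using cos_pos_small cpos by blast
  have js: "2 * \<bar>dd\<bar> / pi \<le> \<bar>sin dd\<bar>" by (rule jordan[OF ddb])
  have "\<bar>D1 m x0 t - D1 m x0 \<alpha>0\<bar> = 2 * \<bar>sin dd\<bar> * \<bar>\<sigma> * D2 m x0 s\<bar>"
    using trig1[of m x0 s dd] s1 unfolding ts[symmetric] by (auto simp: abs_mult)
  also have "\<dots> \<ge> 2 * (2 * \<bar>dd\<bar> / pi) * (\<bar>D2 m x0 \<alpha>0\<bar> / 2)"
    using js sQ ns by (intro mult_mono) auto
  finally show ?thesis by (simp add: dd_def field_simps abs_divide)
qed

lemma hl_eq: assumes "\<kappa> > 0"
  shows "h_l \<kappa> m x0 l t = (if \<kappa> * D1 m x0 t - l \<noteq> 0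
            then pi * (\<kappa> * D1 m x0 t - l) / sin (pi * (\<kappa> * D1 m x0 t - l)) else 1)"
proof -
  have e1: "pi * \<kappa> * (D1 m x0 t - l / \<kappa>) = pi * (\<kappa> * D1 m x0 t - l)"
    using assms by (simp add: field_simps)
  have e2: "(D1 m x0 t - l / \<kappa> \<noteq> 0) = (\<kappa> * D1 m x0 t - l \<noteq> 0)"
    using assms by (auto simp: field_simps)
  show ?thesis unfolding h_l_def deriv_Phil Let_def e1 e2 ..
qed

lemma hl_bound: assumes "\<kappa> > 0" "\<bar>\<kappa> * D1 m x0 t - l\<bar> \<le> 1/2"
  shows "\<bar>h_l \<kappa> m x0 l t\<bar> \<le> pi / 2"
proof (cases "\<kappa> * D1 m x0 t - l = 0")
  case True then show ?thesis using hl_eq[OF assms(1)] pi_gt3 by simp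
next
  case False
  define P where "P = \<kappa> * D1 m x0 t - l"
  have "\<bar>pi * P\<bar> \<le> pi / 2" using assms(2) by (simp add: P_def abs_mult)
  from jordan[OF this] have js: "2 * \<bar>P\<bar> \<le> \<bar>sin (pi * P)\<bar>" by (simp add: abs_mult)
  have Pp: "0 < \<bar>P\<bar>" using False P_def by auto
  have "h_l \<kappa> m x0 l t = pi * P / sin (pi * P)"
    using hl_eq[OF assms(1)] False unfolding P_def by simp
  then have "\<bar>h_l \<kappa> m x0 l t\<bar> = pi * \<bar>P\<bar> / \<bar>sin (pi * P)\<bar>"
    by (simp add: abs_mult abs_divide)
  also have "\<dots> \<le> pi * \<bar>P\<bar> / (2 * \<bar>P\<bar>)"
    using js Pp by (intro divide_left_mono) auto
  also have "\<dots> = pi / 2" using Pp by simp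
  finally show ?thesis .
qed



lemma core:
  fixes g g' :: "real \<Rightarrow> complex"
  assumes kp: "\<kappa> > 0" and pa: "-pi \<le> a" "a \<le> b" "b \<le> pi"
  and gd: "\<forall>t\<in>{a..b}. (g has_vector_derivative g' t) (at t within {a..b})"
  and g'c: "continuous_on {a..b} g'"
  and nz: "\<forall>\<alpha>\<in>{a<..<b}. D2 m x0 \<alpha> \<noteq> 0"
  and a0: "\<alpha>0 \<in> {a..b}" and st: "\<kappa> * D1 m x0 \<alpha>0 = real_of_int l"
  and nz0: "D2 m x0 \<alpha>0 \<noteq> 0"
  and bnd: "\<forall>\<alpha>\<in>{a..b}. \<bar>\<kappa> * D1 m x0 \<alpha> - real_of_int l\<bar> \<le> 1/2"
  and ep: "\<epsilon> > 0"
  shows "norm (integral {a..b} (\<lambda>\<alpha>. g \<alpha> * complex_of_real (h_l \<kappa> m x0 l \<alpha>) * e (Phi_l \<kappa> m x0 l \<alpha> / \<epsilon>)))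
     \<le> 3 * pi * sqrt \<epsilon> * ((SUP \<alpha>\<in>{a..b}. norm (g \<alpha>)) + integral {a..b} (\<lambda>\<alpha>. norm (g' \<alpha>)))
         * \<bar>D2 m x0 \<alpha>0\<bar> powr (-1/2)"
proof -
  define f where "f \<alpha> = g \<alpha> * complex_of_real (h_l \<kappa> m x0 l \<alpha>) * e (Phi_l \<kappa> m x0 l \<alpha> / \<epsilon>)" for \<alpha>
  define Q where "Q = \<bar>D2 m x0 \<alpha>0\<bar>"
  have Qp: "Q > 0" using nz0 by (simp add: Q_def)
  define \<sigma> where "\<sigma> = (if D2 m x0 \<alpha>0 > 0 then 1 else (-1::real))"
  have s1: "\<sigma> = 1 \<or> \<sigma> = -1" by (simp add: \<sigma>_def)
  have sp: "0 < \<sigma> * D2 m x0 \<alpha>0" using nz0 by (auto simp: \<sigma>_def)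
  define M where "M = (SUP \<alpha>\<in>{a..b}. norm (g \<alpha>))"
  define V where "V = integral {a..b} (\<lambda>\<alpha>. norm (g' \<alpha>))"
  have gcont: "continuous_on {a..b} g" using gd continuous_on_vector_derivative by blast
  have bdd: "bdd_above ((\<lambda>\<alpha>. norm (g \<alpha>)) ` {a..b})"
    by (intro bounded_imp_bdd_above compact_imp_bounded compact_continuous_image continuous_intros gcont) auto
  have gM: "norm (g t) \<le> M" if "t \<in> {a..b}" for t
    unfolding M_def using cSUP_upper[OF that bdd] .
  have M0: "0 \<le> M" using gM[of a] pa norm_ge_zero[of "g a"] by (meson atLeastAtMost_iff order.refl order.trans)
  have nint: "(\<lambda>\<alpha>. norm (g' \<alpha>)) integrable_on {a..b}"
    by (intro integrable_continuous_real continuous_intros g'c)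
  have V0: "0 \<le> V" unfolding V_def by (rule integral_nonneg[OF nint]) auto
  define \<delta> where "\<delta> = sqrt (\<epsilon> / Q)"
  have \<delta>p: "\<delta> > 0" using ep Qp by (simp add: \<delta>_def)
  have \<delta>sq: "\<epsilon> / (Q * \<delta>) = \<delta>"
  proof -
    have "\<delta> * \<delta> = \<epsilon> / Q" using ep Qp by (simp add: \<delta>_def)
    then show ?thesis using \<delta>p Qp by (simp add: field_simps)
  qed
  define L where "L = \<kappa> * Q * \<delta> / pi"
  have Lp: "L > 0" using kp Qp \<delta>p by (simp add: L_def)
  have lowP: "\<kappa> * Q * \<bar>t - \<alpha>0\<bar> / pi \<le> \<bar>\<kappa> * D1 m x0 t - real_of_int l\<bar>" if "t \<in> {a..b}" for t
  proof -
    have "Q * \<bar>t - \<alpha>0\<bar> / pi \<le> \<bar>D1 m x0 t - D1 m x0 \<alpha>0\<bar>"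
      using lower_lemma[OF nz a0 sp s1 that pa(1) pa(3)] by (simp add: Q_def)
    then have "\<kappa> * (Q * \<bar>t - \<alpha>0\<bar> / pi) \<le> \<kappa> * \<bar>D1 m x0 t - D1 m x0 \<alpha>0\<bar>"
      using kp by (intro mult_left_mono) auto
    also have "\<dots> = \<bar>\<kappa> * D1 m x0 t - real_of_int l\<bar>"
      using kp st[symmetric] by (simp add: abs_mult right_diff_distrib[symmetric])
    finally show ?thesis by simp
  qed
  have far: "norm (integral {c..d} f) \<le> pi * (M + V) * \<delta>"
    if cd: "c \<le> d" "{c..d} \<subseteq> {a..b}" and fa: "\<forall>t\<in>{c..d}. \<delta> \<le> \<bar>t - \<alpha>0\<bar>" for c d
  proof -
    define P where "P t = \<kappa> * D1 m x0 t - real_of_int l" for t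
    have Pb: "L \<le> \<bar>P t\<bar> \<and> \<bar>P t\<bar> \<le> 1/2" if t: "t \<in> {c..d}" for t
    proof
      have "L \<le> \<kappa> * Q * \<bar>t - \<alpha>0\<bar> / pi"
        unfolding L_def using fa t kp Qp by (intro divide_right_mono mult_left_mono) auto
      also have "\<dots> \<le> \<bar>P t\<bar>" unfolding P_def using lowP cd t by auto
      finally show "L \<le> \<bar>P t\<bar>" .
      show "\<bar>P t\<bar> \<le> 1/2" unfolding P_def using bnd cd t by auto
    qed
    have Pd: "(P has_real_derivative \<kappa> * D2 m x0 t) (at t)" for t
      unfolding P_def[abs_def] by (auto intro!: derivative_eq_intros D1_deriv)
    have Fd: "(Phi_l \<kappa> m x0 l has_real_derivative P t / \<kappa>) (at t)" for t
      using Phil_deriv[of \<kappa> m x0 l t] kp by (simp add: P_def diff_divide_distrib)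
    have sg: "0 \<le> \<sigma> * (\<kappa> * D2 m x0 t)" if "t \<in> {c..d}" for t
      using sign_lemma[OF nz a0 sp, of t] that cd kp
      by (metis mult.left_commute mult_nonneg_nonneg less_imp_le subsetD)
    have gd': "(g has_vector_derivative g' t) (at t within {c..d})" if "t \<in> {c..d}" for t
      using gd that cd by (meson has_vector_derivative_within_subset subsetD)
    obtain I where I: "((\<lambda>t. g t * complex_of_real (pi * P t / sin (pi * P t)) * e (Phi_l \<kappa> m x0 l t / \<epsilon>)) has_integral I) {c..d}"
       "norm I \<le> \<kappa> * \<epsilon> * (M + integral {c..d} (\<lambda>t. norm (g' t))) / L"
      using piece[of c d \<kappa> \<epsilon> L P "\<lambda>t. \<kappa> * D2 m x0 t" \<sigma> "Phi_l \<kappa> m x0 l" g g' M,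
           OF cd(1) kp ep Lp Pd _ s1 sg Fd Pb gd' continuous_on_subset[OF g'c cd(2)]] gM cd
        D2_cont[of "{c..d}" \<kappa> m x0] by blast
    have "(f has_integral I) {c..d}"
    proof (rule has_integral_eq[OF _ I(1)])
      fix t assume t: "t \<in> {c..d}"
      have "P t \<noteq> 0" using Pb[OF t] Lp by auto
      then show "g t * complex_of_real (pi * P t / sin (pi * P t)) * e (Phi_l \<kappa> m x0 l t / \<epsilon>) = f t"
        unfolding f_def hl_eq[OF kp] P_def by simp
    qed
    then have If: "integral {c..d} f = I" by (rule integral_unique)
    have Vcd: "integral {c..d} (\<lambda>t. norm (g' t)) \<le> V"
      unfolding V_def
      by (rule integral_subset_le[OF cd(2) integrable_subinterval_real[OF nint cd(2)] nint]) auto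
    have "norm I \<le> \<kappa> * \<epsilon> * (M + V) / L"
      using I(2) Vcd kp ep Lp by (smt (verit) divide_right_mono mult_left_mono mult_pos_pos)
    also have "\<dots> = pi * (M + V) * (\<epsilon> / (Q * \<delta>))"
      unfolding L_def using kp Qp \<delta>p by (simp add: field_simps)
    finally show ?thesis unfolding If \<delta>sq .
  qed
  have near: "norm (integral {p..q} f) \<le> pi * M * \<delta>"
    if fi: "f integrable_on {p..q}" and pq: "p \<le> q" "{p..q} \<subseteq> {a..b}" "q - p \<le> 2 * \<delta>" for p q
  proof -
    have "norm (integral {p..q} f) \<le> (M * (pi / 2)) * Henstock_Kurzweil_Integration.content (cbox p q)"
    proof (rule has_integral_bound)
      show "0 \<le> M * (pi / 2)" using M0 by simp
      show "(f has_integral integral {p..q} f) (cbox p q)" using fi by auto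
      fix t assume "t \<in> cbox p q"
      then have t: "t \<in> {a..b}" using pq by auto
      have "norm (f t) = norm (g t) * \<bar>h_l \<kappa> m x0 l t\<bar>"
        by (simp add: f_def norm_mult norm_e)
      also have "\<dots> \<le> M * (pi / 2)"
        using gM[OF t] hl_bound[OF kp, of m x0 t l] bnd t M0 by (intro mult_mono) auto
      finally show "norm (f t) \<le> M * (pi / 2)" .
    qed
    also have "\<dots> \<le> (M * (pi / 2)) * (2 * \<delta>)"
      using pq M0 by (intro mult_left_mono) auto
    finally show ?thesis by (simp add: algebra_simps)
  qed
  have main: "norm (integral {a..b} f) \<le> 3 * pi * (M + V) * \<delta>"
  proof (cases "f integrable_on {a..b}")
    case False
    then show ?thesis using M0 V0 \<delta>p by (simp add: not_integrable_integral)
  next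
    case True
    define p where "p = max a (\<alpha>0 - \<delta>)"
    define q where "q = min b (\<alpha>0 + \<delta>)"
    have pq: "a \<le> p" "p \<le> q" "q \<le> b" "q - p \<le> 2 * \<delta>"
      using a0 \<delta>p by (auto simp: p_def q_def)
    have iaq: "f integrable_on {a..q}" by (rule integrable_subinterval_real[OF True]) (use pq in auto)
    have split: "integral {a..b} f = integral {a..p} f + integral {p..q} f + integral {q..b} f"
    proof -
      have c1: "integral {a..p} f + integral {p..q} f = integral {a..q} f"
        by (rule Henstock_Kurzweil_Integration.integral_combine[OF pq(1) pq(2) iaq])
      have c2: "integral {a..q} f + integral {q..b} f = integral {a..b} f"
        by (rule Henstock_Kurzweil_Integration.integral_combine[OF _ pq(3) True]) (use pq in linarith)
      show ?thesis by (simp only: c1[symmetric] c2[symmetric])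
    qed
    have left: "norm (integral {a..p} f) \<le> pi * (M + V) * \<delta>"
    proof (cases "a < p")
      case True
      then have "p = \<alpha>0 - \<delta>" by (simp add: p_def)
      then show ?thesis using pq by (intro far) auto
    next
      case False
      then have "p = a" using pq by auto
      then show ?thesis using M0 V0 \<delta>p by simp
    qed
    have right: "norm (integral {q..b} f) \<le> pi * (M + V) * \<delta>"
    proof (cases "q < b")
      case True
      then have "q = \<alpha>0 + \<delta>" by (simp add: q_def)
      then show ?thesis using pq by (intro far) auto
    next
      case False
      then have "q = b" using pq by auto
      then show ?thesis using M0 V0 \<delta>p by simp
    qed
    have mid: "norm (integral {p..q} f) \<le> pi * M * \<delta>"
      by (rule near[OF integrable_subinterval_real[OF True]]) (use pq in auto)
    have "norm (integral {a..b} f) \<le> norm (integral {a..p} f) + norm (integral {p..q} f) + norm (integral {q..b} f)"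
      unfolding split using norm_triangle_ineq[of "integral {a..p} f + integral {p..q} f" "integral {q..b} f"]
        norm_triangle_ineq[of "integral {a..p} f" "integral {p..q} f"] by linarith
    also have "\<dots> \<le> pi * (M + V) * \<delta> + pi * M * \<delta> + pi * (M + V) * \<delta>"
      using left mid right by linarith
    also have "\<dots> \<le> 3 * pi * (M + V) * \<delta>"
      using V0 \<delta>p by (simp add: algebra_simps)
    finally show ?thesis .
  qed
  have deq: "\<delta> = sqrt \<epsilon> * Q powr (-1/2)"
  proof -
    have "(-1/2::real) = - (1/2)" by simp
    then have "Q powr (-1/2) = inverse (Q powr (1/2))" by (simp only: powr_minus)
    also have "\<dots> = inverse (sqrt Q)" using Qp by (simp only: powr_half_sqrt less_imp_le)
    finally have "Q powr (-1/2) = inverse (sqrt Q)" .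
    then show ?thesis unfolding \<delta>_def by (simp only: divide_inverse real_sqrt_mult real_sqrt_inverse)
  qed
  have "3 * pi * (M + V) * \<delta> = 3 * pi * sqrt \<epsilon> * (M + V) * Q powr (-1/2)"
    unfolding deq by (simp only: mult_ac)
  with main have "norm (integral {a..b} f) \<le> 3 * pi * sqrt \<epsilon> * (M + V) * Q powr (-1/2)"
    by (simp only:)
  then show ?thesis unfolding f_def M_def V_def Q_def .
qed


theorem mainTheorem10:
  fixes \<kappa> :: real and x0 :: "real^2"
  assumes "\<kappa> > 0"
  shows "\<exists>c::real. \<forall>(m::int) (a::real) (b::real) (l::int) (g::real \<Rightarrow> complex)
            (g'::real \<Rightarrow> complex) (\<alpha>0::real) (\<epsilon>::real).
     m \<noteq> 0 \<longrightarrow> -pi \<le> a \<longrightarrow> a \<le> b \<longrightarrow> b \<le> pi \<longrightarrow>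
     (\<forall>t\<in>{a..b}. (g has_vector_derivative g' t) (at t within {a..b})) \<longrightarrow>
     continuous_on {a..b} g' \<longrightarrow>
     (\<forall>\<alpha>\<in>{a<..<b}. deriv (deriv (Phi m x0)) \<alpha> \<noteq> 0) \<longrightarrow>
     \<alpha>0 \<in> {a..b} \<longrightarrow> \<kappa> * deriv (Phi m x0) \<alpha>0 = real_of_int l \<longrightarrow>
     deriv (deriv (Phi m x0)) \<alpha>0 \<noteq> 0 \<longrightarrow>
     (\<forall>\<alpha>\<in>{a..b}. \<bar>\<kappa> * deriv (Phi m x0) \<alpha> - real_of_int l\<bar> \<le> 1/2) \<longrightarrow>
     \<epsilon> > 0 \<longrightarrow>
     norm (integral {a..b} (\<lambda>\<alpha>. g \<alpha> * complex_of_real (h_l \<kappa> m x0 l \<alpha>)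
                                   * e (Phi_l \<kappa> m x0 l \<alpha> / \<epsilon>)))
       \<le> c * sqrt \<epsilon> * ((SUP \<alpha>\<in>{a..b}. norm (g \<alpha>)) + integral {a..b} (\<lambda>\<alpha>. norm (g' \<alpha>)))
           * \<bar>deriv (deriv (Phi m x0)) \<alpha>0\<bar> powr (-1/2)"
proof -
  show ?thesis
  proof (rule exI[of _ "3 * pi"], intro allI impI)
    fix m :: int and a b :: real and l :: int and g g' :: "real \<Rightarrow> complex" and \<alpha>0 \<epsilon> :: real
    assume h: "m \<noteq> 0" "-pi \<le> a" "a \<le> b" "b \<le> pi"
      "\<forall>t\<in>{a..b}. (g has_vector_derivative g' t) (at t within {a..b})"
      "continuous_on {a..b} g'"
      "\<forall>\<alpha>\<in>{a<..<b}. deriv (deriv (Phi m x0)) \<alpha> \<noteq> 0"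
      "\<alpha>0 \<in> {a..b}" "\<kappa> * deriv (Phi m x0) \<alpha>0 = real_of_int l"
      "deriv (deriv (Phi m x0)) \<alpha>0 \<noteq> 0"
      "\<forall>\<alpha>\<in>{a..b}. \<bar>\<kappa> * deriv (Phi m x0) \<alpha> - real_of_int l\<bar> \<le> 1/2"
      "\<epsilon> > 0"
    show "norm (integral {a..b} (\<lambda>\<alpha>. g \<alpha> * complex_of_real (h_l \<kappa> m x0 l \<alpha>)
                                   * e (Phi_l \<kappa> m x0 l \<alpha> / \<epsilon>)))
       \<le> 3 * pi * sqrt \<epsilon> * ((SUP \<alpha>\<in>{a..b}. norm (g \<alpha>)) + integral {a..b} (\<lambda>\<alpha>. norm (g' \<alpha>)))
           * \<bar>deriv (deriv (Phi m x0)) \<alpha>0\<bar> powr (-1/2)"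
      unfolding deriv2_Phi
      by (rule core[OF assms h(2-6) h(7-12)[unfolded deriv2_Phi, unfolded deriv_Phi]])
  qed
qed

end
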